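(* For any even integer $n\ge 0$ and prime $p\ge 3n+7$ we have \begin{align*} \sum_{a,b\ge 0,\, a+b=p-3n-3} \frac{B_b}{p-b}\binom{p-b}{n+1} \frac{B_a}{p-a} \binom{p-a}{n+2}\equiv 0 & \pmod {p},\\ \sum_{a,b\ge 0,\, a+b=p-3n-3} \frac{B_b}{p-b}\binom{p-b}{n+1} \frac{B_a}{p-a} \binom{p-a}{n+1} \equiv 0 &\pmod {p}. \end{align*}
   Context: $B_m$ are the Bernoulli numbers defined by $t/(e^t-1)=\sum_{k\ge 0} B_k t^k/k!$. *)

theory Defs
  imports "HOL-Computational_Algebra.Computational_Algebra"
begin

definition bernoulli :: "nat \<Rightarrow> rat" where
  "bernoulli k = fact k * fps_nth (fps_X / (fps_exp 1 - 1)) k"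

definition rat_cong0 :: "rat \<Rightarrow> nat \<Rightarrow> bool" where
  "rat_cong0 q p \<longleftrightarrow> (\<exists>x y :: int. y \<noteq> 0 \<and> \<not> int p dvd y \<and> int p dvd x \<and> q = of_int x / of_int y)"

end

theory Submission
  imports Defs "HOL-Number_Theory.Cong"
begin

definition pint :: "nat \<Rightarrow> rat \<Rightarrow> bool" where
  "pint p q \<longleftrightarrow> (\<exists>x y :: int. y \<noteq> 0 \<and> \<not> int p dvd y \<and> q = of_int x / of_int y)"

lemma rc_pint: "rat_cong0 q p \<Longrightarrow> pint p q"
  unfolding rat_cong0_def pint_def by blast

lemma pint_of_int: "prime p \<Longrightarrow> pint p (of_int z)"
  unfolding pint_def
  by (rule exI[of _ z], rule exI[of _ 1]) (auto simp: prime_gt_1_nat prime_nat_iff)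

lemma pint_of_nat: "prime p \<Longrightarrow> pint p (of_nat z)"
  using pint_of_int[of p "int z"] by simp

lemma pint_0: "prime p \<Longrightarrow> pint p 0" using pint_of_int[of p 0] by simp
lemma pint_1: "prime p \<Longrightarrow> pint p 1" using pint_of_int[of p 1] by simp

lemma pint_add:
  assumes "prime p" "pint p a" "pint p b" shows "pint p (a + b)"
proof -
  obtain x y where a: "y \<noteq> 0" "\<not> int p dvd y" "a = of_int x / of_int y" using assms(2) unfolding pint_def by blast
  obtain x' y' where b: "y' \<noteq> 0" "\<not> int p dvd y'" "b = of_int x' / of_int y'" using assms(3) unfolding pint_def by blast
  have pp: "prime (int p)" using assms(1) by simp
  have "\<not> int p dvd y * y'" using a b pp by (simp add: prime_dvd_mult_iff)
  moreover have "a + b = of_int (x*y' + x'*y) / of_int (y*y')" using a b by (simp add: field_simps)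
  ultimately show ?thesis unfolding pint_def using a b
    by (intro exI[of _ "x*y' + x'*y"] exI[of _ "y*y'"]) auto
qed

lemma pint_mult:
  assumes "prime p" "pint p a" "pint p b" shows "pint p (a * b)"
proof -
  obtain x y where a: "y \<noteq> 0" "\<not> int p dvd y" "a = of_int x / of_int y" using assms(2) unfolding pint_def by blast
  obtain x' y' where b: "y' \<noteq> 0" "\<not> int p dvd y'" "b = of_int x' / of_int y'" using assms(3) unfolding pint_def by blast
  have pp: "prime (int p)" using assms(1) by simp
  have "\<not> int p dvd y * y'" using a b pp by (simp add: prime_dvd_mult_iff)
  moreover have "a * b = of_int (x*x') / of_int (y*y')" by (simp only: a(3) b(3)) (simp add: field_simps)
  ultimately show ?thesis unfolding pint_def using a b
    by (intro exI[of _ "x*x'"] exI[of _ "y*y'"]) auto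
qed

lemma pint_neg: "pint p a \<Longrightarrow> pint p (- a)"
  unfolding pint_def by (metis minus_divide_left of_int_minus)

lemma pint_diff: "prime p \<Longrightarrow> pint p a \<Longrightarrow> pint p b \<Longrightarrow> pint p (a - b)"
  using pint_add[of p a "-b"] pint_neg by simp

lemma pint_div:
  assumes "prime p" "pint p a" "\<not> int p dvd c" shows "pint p (a / of_int c)"
proof -
  obtain x y where a: "y \<noteq> 0" "\<not> int p dvd y" "a = of_int x / of_int y" using assms(2) unfolding pint_def by blast
  have c0: "c \<noteq> 0" using assms(3) by auto
  have pp: "prime (int p)" using assms(1) by simp
  have "\<not> int p dvd y * c" using a assms(3) pp by (simp add: prime_dvd_mult_iff)
  moreover have "a / of_int c = of_int x / of_int (y*c)" using a c0 by (simp add: field_simps)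
  ultimately show ?thesis unfolding pint_def using a c0
    by (intro exI[of _ "x"] exI[of _ "y*c"]) auto
qed

lemma pint_div_nat:
  assumes "prime p" "pint p a" "\<not> p dvd c" shows "pint p (a / of_nat c)"
  using pint_div[OF assms(1,2), of "int c"] assms(3) by simp

lemma pint_sum: "prime p \<Longrightarrow> (\<And>i. i \<in> A \<Longrightarrow> pint p (f i)) \<Longrightarrow> pint p (\<Sum>i\<in>A. f i)"
  by (induction A rule: infinite_finite_induct) (auto simp: pint_0 pint_add)

lemma pint_power: "prime p \<Longrightarrow> pint p a \<Longrightarrow> pint p (a ^ k)"
  by (induction k) (auto simp: pint_1 pint_mult)

lemma rc_0: "prime p \<Longrightarrow> rat_cong0 0 p"
  unfolding rat_cong0_def by (rule exI[of _ 0], rule exI[of _ 1]) (auto simp: prime_gt_1_nat prime_nat_iff)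

lemma rc_of_int: "int p dvd z \<Longrightarrow> p > 1 \<Longrightarrow> rat_cong0 (of_int z) p"
  unfolding rat_cong0_def by (rule exI[of _ z], rule exI[of _ 1]) auto

lemma rc_add:
  assumes "prime p" "rat_cong0 a p" "rat_cong0 b p" shows "rat_cong0 (a + b) p"
proof -
  obtain x y where a: "y \<noteq> 0" "\<not> int p dvd y" "int p dvd x" "a = of_int x / of_int y" using assms(2) unfolding rat_cong0_def by blast
  obtain x' y' where b: "y' \<noteq> 0" "\<not> int p dvd y'" "int p dvd x'" "b = of_int x' / of_int y'" using assms(3) unfolding rat_cong0_def by blast
  have pp: "prime (int p)" using assms(1) by simp
  have "\<not> int p dvd y * y'" using a b pp by (simp add: prime_dvd_mult_iff)
  moreover have "a + b = of_int (x*y' + x'*y) / of_int (y*y')" using a b by (simp add: field_simps)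
  moreover have "int p dvd x*y' + x'*y" using a b by simp
  ultimately show ?thesis unfolding rat_cong0_def using a b
    by (intro exI[of _ "x*y' + x'*y"] exI[of _ "y*y'"]) auto
qed

lemma rc_mult:
  assumes "prime p" "rat_cong0 a p" "pint p b" shows "rat_cong0 (a * b) p"
proof -
  obtain x y where a: "y \<noteq> 0" "\<not> int p dvd y" "int p dvd x" "a = of_int x / of_int y" using assms(2) unfolding rat_cong0_def by blast
  obtain x' y' where b: "y' \<noteq> 0" "\<not> int p dvd y'" "b = of_int x' / of_int y'" using assms(3) unfolding pint_def by blast
  have pp: "prime (int p)" using assms(1) by simp
  have "\<not> int p dvd y * y'" using a b pp by (simp add: prime_dvd_mult_iff)
  moreover have "a * b = of_int (x*x') / of_int (y*y')" by (simp only: a(4) b(3)) (simp add: field_simps)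
  moreover have "int p dvd x*x'" using a b by simp
  ultimately show ?thesis unfolding rat_cong0_def using a b
    by (intro exI[of _ "x*x'"] exI[of _ "y*y'"]) auto
qed

lemma rc_mult': "prime p \<Longrightarrow> pint p b \<Longrightarrow> rat_cong0 a p \<Longrightarrow> rat_cong0 (b * a) p"
  using rc_mult[of p a b] by (simp add: mult.commute)

lemma rc_neg: "rat_cong0 a p \<Longrightarrow> rat_cong0 (- a) p"
  unfolding rat_cong0_def by (metis dvd_minus_iff minus_divide_left of_int_minus)

lemma rc_diff: "prime p \<Longrightarrow> rat_cong0 a p \<Longrightarrow> rat_cong0 b p \<Longrightarrow> rat_cong0 (a - b) p"
  using rc_add[of p a "-b"] rc_neg by simp

lemma rc_sum: "prime p \<Longrightarrow> (\<And>i. i \<in> A \<Longrightarrow> rat_cong0 (f i) p) \<Longrightarrow> rat_cong0 (\<Sum>i\<in>A. f i) p"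
  by (induction A rule: infinite_finite_induct) (auto simp: rc_0 rc_add)

lemma rc_cancel:
  assumes "rat_cong0 (of_int c * a) p" "\<not> int p dvd c" "prime p"
  shows "rat_cong0 a p"
proof -
  obtain x y where a: "y \<noteq> 0" "\<not> int p dvd y" "int p dvd x" "of_int c * a = of_int x / of_int y" using assms(1) unfolding rat_cong0_def by blast
  have c0: "c \<noteq> 0" using assms(2) by auto
  have pp: "prime (int p)" using assms(3) by simp
  have "\<not> int p dvd y * c" using a assms(2) pp by (simp add: prime_dvd_mult_iff)
  moreover have "a = of_int x / of_int (y*c)" using a c0 by (simp add: field_simps)
  ultimately show ?thesis unfolding rat_cong0_def using a c0
    by (intro exI[of _ "x"] exI[of _ "y*c"]) auto
qed

lemma rc_p: "prime p \<Longrightarrow> rat_cong0 (of_nat p) p"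
  using rc_of_int[of p "int p"] prime_gt_1_nat by simp

abbreviation bf :: "rat fps" where "bf \<equiv> fps_X / (fps_exp 1 - 1)"
abbreviation E1 :: "rat fps" where "E1 \<equiv> fps_exp 1 - 1"

lemma E1_nth: "E1 $ n = (if n = 0 then 0 else 1 / fact n)"
  by simp

lemma E1_nz: "E1 \<noteq> 0"
proof
  assume "E1 = 0"
  then have "E1 $ 1 = 0" by simp
  then show False by simp
qed

lemma E1_subdeg: "subdegree E1 = 1"
  by (rule subdegreeI) auto

lemma bf_mult: "bf * E1 = fps_X"
proof -
  have "subdegree (fps_X::rat fps) \<ge> subdegree E1" by (simp only: E1_subdeg) simp
  then show ?thesis by (rule fps_times_divide_eq[OF E1_nz])
qed

lemma bern0: "bernoulli 0 = 1"
proof -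
  have "(bf * E1) $ 1 = 1" using bf_mult by simp
  then show ?thesis unfolding bernoulli_def by (simp add: fps_mult_nth)
qed

lemma bern_rec:
  assumes "m \<ge> 1"
  shows "(\<Sum>j\<le>m. of_nat ((m+1) choose j) * bernoulli j) = 0"
proof -
  have "(bf * E1) $ (m+1) = 0" using bf_mult assms by simp
  then have "(\<Sum>i=0..m+1. bf $ i * E1 $ (m + 1 - i)) = 0" by (simp add: fps_mult_nth)
  then have "(\<Sum>i\<le>m. bf $ i * E1 $ (m + 1 - i)) = 0"
    by (simp add: atMost_atLeast0)
  then have "(\<Sum>i\<le>m. bf $ i / fact (m + 1 - i)) = 0"
    by (simp add: E1_nth)
  then have "fact (m+1) * (\<Sum>i\<le>m. bf $ i / fact (m + 1 - i)) = 0" by simp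
  then have *: "(\<Sum>i\<le>m. fact (m+1) * bf $ i / fact (m + 1 - i)) = 0"
    by (simp add: sum_distrib_left)
  have "of_nat ((m+1) choose j) * bernoulli j = fact (m+1) * bf $ j / fact (m + 1 - j)" if "j \<le> m" for j
  proof -
    have "fact j * fact (m+1-j) * ((m+1) choose j) = (fact (m+1) :: nat)"
      using binomial_fact_lemma[of j "m+1"] that by simp
    then have "(fact j * fact (m+1-j) * of_nat ((m+1) choose j) :: rat) = fact (m+1)"
      by (metis of_nat_fact of_nat_mult)
    then have "fact (m+1) / fact (m+1-j) = (fact j * of_nat ((m+1) choose j) * fact (m+1-j)) / (fact (m+1-j) :: rat)"
      by (simp add: ac_simps)
    also have "\<dots> = fact j * of_nat ((m+1) choose j)" by simp
    finally have "fact (m+1) / fact (m+1-j) = (fact j * of_nat ((m+1) choose j) :: rat)" .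
    then have "fact (m+1) * bf $ j / fact (m + 1 - j) = fact j * of_nat ((m+1) choose j) * bf $ j"
      by (metis times_divide_eq_left mult.commute)
    then show ?thesis unfolding bernoulli_def by simp
  qed
  then show ?thesis using * by simp
qed

lemma ring_aux: "((a::'a::comm_ring_1) * b - c * d) * e = a * (b * e) - (c * e) * d"
  by (simp add: algebra_simps)

lemma power_sum_bern:
  "(\<Sum>j<x. (of_nat j :: rat) ^ m) =
     (\<Sum>a\<le>m. of_nat ((m+1) choose a) * bernoulli a / of_nat (m+1) * of_nat x ^ (m+1-a))"
proof -
  define A where "A = (\<Sum>j<x. fps_exp (of_nat j :: rat))"
  have AE: "A * E1 = fps_exp (of_nat x) - 1" unfolding A_def
  proof (induction x)
    case 0 then show ?case by simp
  next
    case (Suc x)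
    have e: "fps_exp (of_nat (Suc x) :: rat) = fps_exp (of_nat x) * fps_exp 1"
      by (simp add: fps_exp_add_mult[symmetric])
    have "(\<Sum>j<Suc x. fps_exp (of_nat j :: rat)) * E1 = (\<Sum>j<x. fps_exp (of_nat j :: rat)) * E1 + fps_exp (of_nat x) * E1"
      by (simp add: distrib_right)
    also have "\<dots> = fps_exp (of_nat x) - 1 + fps_exp (of_nat x) * E1" using Suc by simp
    also have "\<dots> = fps_exp (of_nat x) * fps_exp 1 - 1" by (simp add: right_diff_distrib)
    finally show ?case using e by simp
  qed
  have "(fps_X * A - bf * (fps_exp (of_nat x) - 1)) * E1 = fps_X * (A * E1) - (bf * E1) * (fps_exp (of_nat x) - 1)"
    by (rule ring_aux)
  also have "\<dots> = 0" unfolding AE bf_mult by simp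
  finally have "(fps_X * A - bf * (fps_exp (of_nat x) - 1)) * E1 = 0" .
  then have eq: "fps_X * A = bf * (fps_exp (of_nat x) - 1)" using E1_nz by simp
  have h1: "(fps_X * A) $ Suc m = (\<Sum>j<x. (of_nat j :: rat) ^ m) / fact m"
    unfolding A_def by (simp add: fps_sum_nth sum_divide_distrib)
  have "(fps_X * A) $ Suc m = (\<Sum>i=0..Suc m. bf $ i * (fps_exp (of_nat x) - 1) $ (Suc m - i))"
    unfolding eq by (simp add: fps_mult_nth)
  also have "\<dots> = (\<Sum>i\<le>m. bf $ i * of_nat x ^ (Suc m - i) / fact (Suc m - i))"
    by (simp add: atMost_atLeast0 del: sum.atMost_Suc)
  finally have "(\<Sum>j<x. (of_nat j :: rat) ^ m) / fact m = (\<Sum>i\<le>m. bf $ i * of_nat x ^ (Suc m - i) / fact (Suc m - i))"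
    using h1 by simp
  then have "(\<Sum>j<x. (of_nat j :: rat) ^ m) = fact m * (\<Sum>i\<le>m. bf $ i * of_nat x ^ (Suc m - i) / fact (Suc m - i))"
    by (simp add: field_simps)
  also have "\<dots> = (\<Sum>a\<le>m. of_nat ((m+1) choose a) * bernoulli a / of_nat (m+1) * of_nat x ^ (m+1-a))"
    unfolding sum_distrib_left
  proof (rule sum.cong[OF refl])
    fix j assume "j \<in> {..m}"
    then have j: "j \<le> m" by simp
    have "fact j * fact (m+1-j) * ((m+1) choose j) = (fact (m+1) :: nat)"
      using binomial_fact_lemma[of j "m+1"] j by simp
    then have "(fact j * fact (m+1-j) * of_nat ((m+1) choose j) :: rat) = fact (m+1)"
      by (metis of_nat_fact of_nat_mult)
    then have "(fact j * fact (m+1-j) * of_nat ((m+1) choose j) :: rat) = of_nat (m+1) * fact m"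
      by simp
    then have c: "of_nat ((m+1) choose j) * fact j / of_nat (m+1) = (fact m / fact (m+1-j) :: rat)"
      by (simp add: field_simps)
    have "fact m * (bf $ j * of_nat x ^ (Suc m - j) / fact (Suc m - j)) =
         (fact m / fact (m+1-j)) * bf $ j * of_nat x ^ (m+1-j)" by simp
    also have "\<dots> = (of_nat ((m+1) choose j) * fact j / of_nat (m+1)) * bf $ j * of_nat x ^ (m+1-j)"
      unfolding c ..
    also have "\<dots> = of_nat ((m+1) choose j) * bernoulli j / of_nat (m+1) * of_nat x ^ (m+1-j)"
      unfolding bernoulli_def by simp
    finally show "fact m * (bf $ j * of_nat x ^ (Suc m - j) / fact (Suc m - j)) =
         of_nat ((m+1) choose j) * bernoulli j / of_nat (m+1) * of_nat x ^ (m+1-j)" .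
  qed
  finally show ?thesis .
qed

definition sg :: "rat fps \<Rightarrow> rat fps" where "sg a = Abs_fps (\<lambda>n. (-1)^n * a $ n)"

lemma sg_mult: "sg (a * b) = sg a * sg b"
proof (rule fps_ext)
  fix n
  have "sg (a*b) $ n = (\<Sum>i=0..n. (-1)^n * (a $ i * b $ (n - i)))"
    by (simp add: sg_def fps_mult_nth sum_distrib_left)
  also have "\<dots> = (\<Sum>i=0..n. ((-1)^i * a $ i) * ((-1)^(n-i) * b $ (n - i)))"
  proof (rule sum.cong[OF refl])
    fix i assume "i \<in> {0..n}"
    then have "(-1::rat)^n = (-1)^i * (-1)^(n-i)" by (simp add: power_add[symmetric])
    then show "(-1)^n * (a $ i * b $ (n - i)) = ((-1)^i * a $ i) * ((-1)^(n-i) * b $ (n - i))"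
      by simp
  qed
  also have "\<dots> = (sg a * sg b) $ n" by (simp add: sg_def fps_mult_nth)
  finally show "sg (a*b) $ n = (sg a * sg b) $ n" .
qed

lemma ring_aux2: "(s::'a::comm_ring_1) * (em - 1) = - x \<Longrightarrow> em * e = 1 \<Longrightarrow> s * (e - 1) = x * e"
proof -
  assume a: "s * (em - 1) = - x" and b: "em * e = 1"
  have "s * (em - 1) * (- e) = s * (e - em * e)" by (simp add: algebra_simps)
  then have "s * (e - 1) = s * (em - 1) * (- e)" using b by simp
  also have "\<dots> = x * e" using a by simp
  finally show ?thesis .
qed

lemma ring_aux3: "(b::'a::comm_ring_1) * (e - 1) = x \<Longrightarrow> (b + x) * (e - 1) = x * e"
  by (simp add: algebra_simps)

lemma bern_odd:
  assumes "odd m" "m \<ge> 3"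
  shows "bernoulli m = 0"
proof -
  have s1: "sg (fps_exp 1 - 1) = fps_exp (-1) - 1"
    by (rule fps_ext) (simp add: sg_def)
  have sX: "sg fps_X = - fps_X"
    by (rule fps_ext) (simp add: sg_def fps_X_def)
  have a: "sg bf * (fps_exp (-1) - 1) = - fps_X"
    using sg_mult[of bf E1] bf_mult s1 sX by simp
  have b: "fps_exp (-1) * fps_exp (1::rat) = 1"
    using fps_exp_add_mult[of "-1::rat" 1] by simp
  have c: "sg bf * E1 = fps_X * fps_exp 1" by (rule ring_aux2[OF a b])
  have d: "(bf + fps_X) * E1 = fps_X * fps_exp 1" by (rule ring_aux3[OF bf_mult])
  have "(sg bf - (bf + fps_X)) * E1 = 0" unfolding left_diff_distrib c d by simp
  then have "sg bf = bf + fps_X" using E1_nz by simp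
  then have "sg bf $ m = (bf + fps_X) $ m" by simp
  then have "- bf $ m = bf $ m" using assms by (simp add: sg_def fps_X_def)
  then have "bf $ m = 0" by simp
  then show ?thesis unfolding bernoulli_def by simp
qed

lemma bern_pint:
  assumes "prime p" "m + 2 \<le> p"
  shows "pint p (bernoulli m)"
  using assms(2)
proof (induction m rule: less_induct)
  case (less m)
  show ?case
  proof (cases "m = 0")
    case True then show ?thesis using bern0 pint_1[OF assms(1)] by simp
  next
    case False
    then have "(\<Sum>j\<le>m. of_nat ((m+1) choose j) * bernoulli j) = 0" using bern_rec by simp
    then have "of_nat ((m+1) choose m) * bernoulli m + (\<Sum>j<m. of_nat ((m+1) choose j) * bernoulli j) = 0"
      by (simp add: lessThan_Suc_atMost[symmetric])
    then have eq: "bernoulli m = - (\<Sum>j<m. of_nat ((m+1) choose j) * bernoulli j) / of_nat (m+1)"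
      by (simp add: field_simps binomial_Suc_n)
    have S: "pint p (\<Sum>j<m. of_nat ((m+1) choose j) * bernoulli j)"
    proof (rule pint_sum[OF assms(1)])
      fix j assume "j \<in> {..<m}"
      then have "pint p (bernoulli j)" using less by simp
      then show "pint p (of_nat ((m+1) choose j) * bernoulli j)"
        by (rule pint_mult[OF assms(1) pint_of_nat[OF assms(1)]])
    qed
    have nd: "\<not> p dvd (m+1)"
    proof
      assume "p dvd (m+1)"
      then have "p \<le> m+1" by (rule dvd_imp_le) simp
      then show False using less.prems by simp
    qed
    show ?thesis unfolding eq by (rule pint_div_nat[OF assms(1) pint_neg[OF S] nd])
  qed
qed

lemma rc_pmult: "prime p \<Longrightarrow> pint p q \<Longrightarrow> rat_cong0 (of_nat p * q) p"
  by (rule rc_mult[OF _ rc_p]) auto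

lemma binom_cong:
  assumes "prime p" "u + v \<le> p - 1"
  shows "[int ((p-1-u) choose v) = (-1)^v * int ((u+v) choose v)] (mod int p)"
  using assms(2)
proof (induction v)
  case 0 then show ?case by simp
next
  case (Suc v)
  have IH: "[int ((p-1-u) choose v) = (-1)^v * int ((u+v) choose v)] (mod int p)"
    using Suc by simp
  have e1: "Suc v * ((p-1-u) choose Suc v) = (p-1-u-v) * ((p-1-u) choose v)"
  proof -
    have "(p - 1 - u - v) * ((p-1-u) choose v) = (p-1-u) * ((p-1-u-1) choose v)"
      by (rule binomial_absorb_comp)
    moreover have "Suc v * ((p-1-u) choose Suc v) = (p-1-u) * ((p-1-u-1) choose v)"
      using Suc_times_binomial[of v "p-2-u"] Suc.prems by (simp add: Suc_diff_Suc numeral_2_eq_2)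
    ultimately show ?thesis by simp
  qed
  have e2: "Suc v * ((u + Suc v) choose Suc v) = (u + Suc v) * ((u+v) choose v)"
    using Suc_times_binomial[of v "u+v"] by simp
  have "[int (Suc v) * int ((p-1-u) choose Suc v) = int (p-1-u-v) * int ((p-1-u) choose v)] (mod int p)"
    using e1 by (metis of_nat_mult cong_refl)
  moreover have "[int (p-1-u-v) = - int (u + Suc v)] (mod int p)"
  proof -
    have "int (p-1-u-v) = - int (u + Suc v) + int p" using Suc.prems by simp
    then show ?thesis by (simp add: cong_iff_dvd_diff)
  qed
  ultimately have "[int (Suc v) * int ((p-1-u) choose Suc v) = - int (u + Suc v) * ((-1)^v * int ((u+v) choose v))] (mod int p)"
    using IH by (meson cong_mult cong_trans)
  also have "- int (u + Suc v) * ((-1)^v * int ((u+v) choose v)) = int (Suc v) * ((-1)^Suc v * int ((u + Suc v) choose Suc v))"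
  proof -
    have "int (Suc v) * int ((u + Suc v) choose Suc v) = int (u + Suc v) * int ((u+v) choose v)"
      using e2 by (metis of_nat_mult)
    moreover have h: "a*b = c*d \<Longrightarrow> - c * (s * d) = a * (- s * b)" for a b c d s :: int
      by (simp add: algebra_simps)
    moreover have "(-1::int)^Suc v = - ((-1)^v)" by simp
    ultimately show ?thesis by metis
  qed
  finally have c: "[int (Suc v) * int ((p-1-u) choose Suc v) = int (Suc v) * ((-1)^Suc v * int ((u + Suc v) choose Suc v))] (mod int p)" .
  have "coprime (int (Suc v)) (int p)"
  proof -
    have "\<not> p dvd Suc v"
    proof
      assume "p dvd Suc v" then have "p \<le> Suc v" by (rule dvd_imp_le) simp
      then show False using Suc.prems prime_gt_1_nat[OF assms(1)] by simp
    qed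
    then have "coprime p (Suc v)" using assms(1) by (simp add: prime_imp_coprime)
    then have "coprime (int p) (int (Suc v))" by (simp only: coprime_int_iff)
    then show ?thesis by (simp only: coprime_commute)
  qed
  from cong_mult_lcancel[OF this] c show ?case by blast
qed

definition psc :: "nat \<Rightarrow> nat \<Rightarrow> rat" where
  "psc m a = of_nat ((m+1) choose a) * bernoulli a / of_nat (m+1)"

definition PS :: "nat \<Rightarrow> rat poly" where
  "PS m = (\<Sum>a\<le>m. monom (psc m a) (m+1-a))"

lemma poly_PS: "poly (PS m) (of_nat x) = (\<Sum>j<x. of_nat j ^ m)"
  unfolding PS_def power_sum_bern by (simp add: poly_sum poly_monom psc_def)

lemma pint_psc: "prime p \<Longrightarrow> m + 2 \<le> p \<Longrightarrow> a \<le> m \<Longrightarrow> pint p (psc m a)"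
  unfolding psc_def
proof (rule pint_div_nat)
  assume p: "prime p" and m: "m + 2 \<le> p" and a: "a \<le> m"
  show "pint p (of_nat ((m+1) choose a) * bernoulli a)"
    by (rule pint_mult[OF p pint_of_nat[OF p] bern_pint[OF p]]) (use m a in simp)
  show "\<not> p dvd (m+1)"
  proof
    assume "p dvd (m+1)" then have "p \<le> m+1" by (rule dvd_imp_le) simp
    then show False using m by simp
  qed
qed (auto)

lemma coeff_PS: "coeff (PS m) d = (if 1 \<le> d \<and> d \<le> m+1 then psc m (m+1-d) else 0)"
proof -
  have "coeff (PS m) d = (\<Sum>a\<le>m. if m+1-a = d then psc m a else 0)"
    unfolding PS_def by (simp add: coeff_sum coeff_monom)
  also have "\<dots> = (\<Sum>a\<le>m. if a = m+1-d \<and> 1 \<le> d \<and> d \<le> m+1 then psc m a else 0)"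
    by (rule sum.cong) auto
  also have "\<dots> = (if 1 \<le> d \<and> d \<le> m+1 then psc m (m+1-d) else 0)"
    by (cases "1 \<le> d \<and> d \<le> m+1") (auto simp: sum.delta)
  finally show ?thesis .
qed

lemma pint_coeff_PS: "prime p \<Longrightarrow> m + 2 \<le> p \<Longrightarrow> pint p (coeff (PS m) d)"
  unfolding coeff_PS by (auto intro: pint_psc pint_0)

lemma degree_PS: "degree (PS m) \<le> m + 1"
  by (rule degree_le) (simp add: coeff_PS)

lemma pderiv_PS:
  assumes "m \<ge> 1"
  shows "pderiv (PS m) = smult (of_nat m) (PS (m-1)) + [:bernoulli m:]"
proof (rule poly_eqI)
  fix e
  show "coeff (pderiv (PS m)) e = coeff (smult (of_nat m) (PS (m-1)) + [:bernoulli m:]) e"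
  proof (cases "e = 0")
    case True
    then show ?thesis using assms by (simp add: coeff_pderiv coeff_PS psc_def)
  next
    case False
    show ?thesis
    proof (cases "e \<le> m")
      case True
      obtain k where k: "m = e + k" using True le_Suc_ex by blast
      have b1: "((m+1) choose (m-e)) = ((m+1) choose (e+1))"
        using binomial_symmetric[of "e+1" "m+1"] True by simp
      have b2: "(m choose (m-e)) = (m choose e)"
        using binomial_symmetric[of e m] True by simp
      have b3: "of_nat (Suc e) * of_nat ((m+1) choose (e+1)) = (of_nat (m+1) * of_nat (m choose e) :: rat)"
        using Suc_times_binomial[of e m] by (metis Suc_eq_plus1 of_nat_mult)
      have c1: "coeff (PS m) (Suc e) = psc m (m - e)"
        using True by (simp add: coeff_PS)
      have lhs: "coeff (pderiv (PS m)) e = of_nat (Suc e) * (of_nat ((m+1) choose (e+1)) * bernoulli (m-e) / of_nat (m+1))"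
        by (simp only: coeff_pderiv c1 psc_def b1)
      have c2: "coeff (PS (m-1)) e = psc (m-1) (m-e)"
        using True False assms by (simp add: coeff_PS)
      have c3: "psc (m-1) (m-e) = of_nat (m choose e) * bernoulli (m-e) / of_nat m"
        unfolding psc_def using assms by (simp add: b2)
      have rhs: "coeff (smult (of_nat m) (PS (m-1)) + [:bernoulli m:]) e = of_nat m * (of_nat (m choose e) * bernoulli (m-e) / of_nat m)"
      proof -
        have z: "coeff [:bernoulli m:] e = 0" using \<open>e \<noteq> 0\<close> by (cases e) auto
        show ?thesis by (simp only: coeff_add coeff_smult c2 c3 z add_0_right)
      qed
      have h: "x*y = z*w \<Longrightarrow> z \<noteq> 0 \<Longrightarrow> mm \<noteq> 0 \<Longrightarrow> x*(y*b/z) = mm*(w*b/mm)" for x y z w b mm :: rat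
        by (simp add: field_simps)
      show ?thesis unfolding lhs rhs by (rule h[OF b3]) (use assms in auto)
    next
      case False
      then show ?thesis using \<open>e \<noteq> 0\<close> assms by (simp add: coeff_pderiv coeff_PS coeff_pCons split: nat.split)
    qed
  qed
qed

lemma fermat_pow: assumes "prime p" shows "[x ^ p = x] (mod p)"
proof (induction x)
  case 0 then show ?case using assms prime_gt_0_nat by (simp add: power_0_left)
next
  case (Suc x)
  have p0: "p > 0" using prime_gt_0_nat[OF assms] .
  have "(x + 1) ^ p = (\<Sum>k\<le>p. (p choose k) * x ^ k * 1 ^ (p - k))"
    using binomial_ring[of x 1 p] by simp
  also have "\<dots> = 1 + x ^ p + (\<Sum>k\<in>{1..p-1}. (p choose k) * x ^ k)"
  proof -
    have A: "{..p} = insert 0 (insert p {1..p-1})" using p0 by auto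
    have n1: "0 \<notin> insert p {1..p-1}" using p0 by auto
    have n2: "p \<notin> {1..p-1}" by auto
    show ?thesis unfolding A
      by (simp only: sum.insert[OF _ n1] sum.insert[OF _ n2] finite_insert finite_atLeastAtMost) simp
  qed
  finally have eq: "(x + 1) ^ p = 1 + x ^ p + (\<Sum>k\<in>{1..p-1}. (p choose k) * x ^ k)" .
  have "p dvd (\<Sum>k\<in>{1..p-1}. (p choose k) * x ^ k)"
    by (rule dvd_sum) (use assms p0 in \<open>auto intro!: dvd_mult2 dvd_choose_prime\<close>)
  then have "[(\<Sum>k\<in>{1..p-1}. (p choose k) * x ^ k) = 0] (mod p)" by (simp add: cong_0_iff)
  then have "[(x+1)^p = 1 + x ^ p + 0] (mod p)" unfolding eq by (intro cong_add cong_refl)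
  then have "[(x+1)^p = 1 + x] (mod p)" using Suc by (metis add_0_right cong_add_lcancel_nat cong_trans cong_sym cong_add cong_refl)
  then show ?case by simp
qed

lemma fermat_nat: assumes "prime p" "\<not> p dvd x" shows "[x ^ (p - 1) = 1] (mod p)"
proof -
  have p0: "p > 0" using prime_gt_0_nat[OF assms(1)] .
  have "Suc (p - 1) = p" using p0 by simp
  then have "x * x ^ (p - 1) = x ^ p" by (metis power_Suc)
  then have h: "[x * x ^ (p - 1) = x * 1] (mod p)" using fermat_pow[OF assms(1), of x] by simp
  have "coprime p x" using assms by (intro prime_imp_coprime)
  then have c: "coprime x p" by (rule coprime_commute[THEN iffD1])
  from h show ?thesis by (subst (asm) cong_mult_lcancel_nat[OF c])
qed

lemma pow_reduce:
  assumes "prime p" "\<not> p dvd x"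
  shows "[x ^ e = x ^ (e mod (p - 1))] (mod p)"
proof -
  have "x ^ e = x ^ ((p-1) * (e div (p-1)) + e mod (p-1))" by simp
  also have "\<dots> = (x ^ (p-1)) ^ (e div (p-1)) * x ^ (e mod (p-1))" by (simp only: power_add power_mult)
  finally have "x ^ e = (x ^ (p-1)) ^ (e div (p-1)) * x ^ (e mod (p-1))" .
  moreover have "[(x ^ (p-1)) ^ (e div (p-1)) * x ^ (e mod (p-1)) = 1 ^ (e div (p-1)) * x ^ (e mod (p-1))] (mod p)"
    by (intro cong_mult cong_pow fermat_nat assms cong_refl)
  ultimately show ?thesis by simp
qed

lemma psum_zero_small:
  assumes "prime p" "0 < r" "r + 2 \<le> p"
  shows "rat_cong0 (\<Sum>x<p. (of_nat x :: rat) ^ r) p"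
proof -
  have "(\<Sum>x<p. (of_nat x :: rat) ^ r) = (\<Sum>a\<le>r. of_nat p * (psc r a * of_nat p ^ (r - a)))"
    unfolding power_sum_bern
  proof (rule sum.cong[OF refl])
    fix a assume "a \<in> {..r}"
    then have e: "r + 1 - a = Suc (r - a)" by auto
    show "of_nat ((r+1) choose a) * bernoulli a / of_nat (r+1) * of_nat p ^ (r+1-a) = of_nat p * (psc r a * of_nat p ^ (r - a))"
      unfolding e psc_def power_Suc by (simp add: ac_simps)
  qed
  also have "rat_cong0 \<dots> p"
    by (rule rc_sum[OF assms(1)], rule rc_pmult[OF assms(1)], rule pint_mult[OF assms(1)])
       (use assms in \<open>auto intro: pint_psc pint_power pint_of_nat\<close>)
  finally show ?thesis .
qed

lemma rc_nat_cong:
  assumes "prime p" "[a = b] (mod p)" "rat_cong0 (of_nat b + c) p"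
  shows "rat_cong0 (of_nat a + c) p"
proof -
  have "int p dvd int a - int b" using assms(2) by (metis cong_int_iff cong_iff_dvd_diff)
  then have "rat_cong0 (of_int (int a - int b)) p" using rc_of_int prime_gt_1_nat[OF assms(1)] by blast
  from rc_add[OF assms(1) this assms(3)] show ?thesis by simp
qed

lemma psum_cong:
  assumes p: "prime p"
  shows "rat_cong0 ((\<Sum>x<p. (of_nat x :: rat) ^ e) - (if 0 < e \<and> (p-1) dvd e then -1 else 0)) p"
proof -
  have p1: "p > 1" using prime_gt_1_nat[OF p] .
  consider "e = 0" | "e > 0" "(p-1) dvd e" | "e > 0" "\<not> (p-1) dvd e" by blast
  then show ?thesis
  proof cases
    case 1 then show ?thesis using rc_p[OF p] by simp
  next
    case 2
    have "[(\<Sum>x<p. x ^ e) = (\<Sum>x<p. if x = 0 then 0 else 1)] (mod p)"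
    proof (rule cong_sum)
      fix x assume x: "x \<in> {..<p}"
      show "[x ^ e = (if x = 0 then 0 else 1)] (mod p)"
      proof (cases "x = 0")
        case True then show ?thesis using 2 by (simp add: power_0_left)
      next
        case False
        have "\<not> p dvd x"
        proof
          assume "p dvd x"
          then have "p \<le> x" using False by (intro dvd_imp_le) auto
          then show False using x by simp
        qed
        then have "[x ^ e = x ^ (e mod (p-1))] (mod p)" by (rule pow_reduce[OF p])
        then show ?thesis using 2 False by simp
      qed
    qed
    moreover have "(\<Sum>x<p. if x = 0 then 0 else 1::nat) = p - 1"
    proof -
      obtain q where q: "p = Suc q" using p1 by (cases p) auto
      show ?thesis unfolding q by (simp only: sum.lessThan_Suc_shift) simp
    qed
    ultimately have "[(\<Sum>x<p. x ^ e) = p - 1] (mod p)" by simp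
    then have "[(\<Sum>x<p. x ^ e) + 1 = p - 1 + 1] (mod p)" by (rule cong_add) simp
    moreover have "p - 1 + 1 = p" using p1 by simp
    ultimately have "[(\<Sum>x<p. x ^ e) + 1 = p] (mod p)" by simp
    moreover have "[p = 0] (mod p)" by (simp add: cong_0_iff)
    ultimately have "[(\<Sum>x<p. x ^ e) + 1 = 0] (mod p)" by (rule cong_trans)
    then have "p dvd (\<Sum>x<p. x ^ e) + 1" by (simp add: cong_0_iff)
    then have "int p dvd int ((\<Sum>x<p. x ^ e) + 1)" by (simp only: int_dvd_int_iff)
    then have "rat_cong0 (of_int (int ((\<Sum>x<p. x ^ e) + 1))) p" using rc_of_int p1 by blast
    then show ?thesis using 2 by (simp add: add.commute)
  next
    case 3
    define r where "r = e mod (p-1)"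
    have r0: "r > 0" using 3 unfolding r_def by (metis dvd_eq_mod_eq_0 gr0I)
    have "r < p - 1" unfolding r_def using p1 by simp
    then have r1: "r + 2 \<le> p" by linarith
    have "[(\<Sum>x<p. x ^ e) = (\<Sum>x<p. x ^ r)] (mod p)"
    proof (rule cong_sum)
      fix x assume x: "x \<in> {..<p}"
      show "[x ^ e = x ^ r] (mod p)"
      proof (cases "x = 0")
        case True then show ?thesis using 3 r0 by (simp add: power_0_left)
      next
        case False
        have "\<not> p dvd x"
        proof
          assume "p dvd x"
          then have "p \<le> x" using False by (intro dvd_imp_le) auto
          then show False using x by simp
        qed
        then show ?thesis unfolding r_def by (rule pow_reduce[OF p])
      qed
    qed
    moreover have "rat_cong0 (of_nat (\<Sum>x<p. x ^ r) + 0) p"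
      using psum_zero_small[OF p r0 r1] by simp
    ultimately have c: "rat_cong0 (of_nat (\<Sum>x<p. x ^ e) + 0) p" by (rule rc_nat_cong[OF p])
    have h1: "(if 0 < e \<and> (p-1) dvd e then -1 else (0::rat)) = 0" using 3 by auto
    have h2: "of_nat (\<Sum>x<p. x ^ e) + 0 = (\<Sum>x<p. (of_nat x::rat) ^ e) - 0"
      by (simp only: of_nat_sum of_nat_power add_0_right diff_0_right)
    show ?thesis unfolding h1 using c unfolding h2 .
  qed
qed

lemma poly_bound:
  fixes Q :: "rat poly"
  assumes "degree Q \<le> D" shows "poly Q x = (\<Sum>m\<le>D. coeff Q m * x ^ m)"
proof -
  have "poly Q x = (\<Sum>i\<le>degree Q. coeff Q i * x ^ i)" by (rule poly_altdef)
  also have "\<dots> = (\<Sum>m\<le>D. coeff Q m * x ^ m)"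
    by (rule sum.mono_neutral_left) (use assms in \<open>auto simp: coeff_eq_0\<close>)
  finally show ?thesis .
qed

lemma GL:
  assumes p: "prime p" and c: "\<And>m. pint p (coeff Q m)" and d: "degree Q \<le> D"
  shows "rat_cong0 ((\<Sum>x<p. of_nat x ^ r * poly Q (of_nat x)) +
           (\<Sum>m\<le>D. if 0 < r + m \<and> (p-1) dvd (r + m) then coeff Q m else 0)) p"
proof -
  have "(\<Sum>x<p. of_nat x ^ r * poly Q (of_nat x)) = (\<Sum>x<p. \<Sum>m\<le>D. coeff Q m * (of_nat x :: rat) ^ (r + m))"
    unfolding poly_bound[OF d] sum_distrib_left by (simp add: power_add ac_simps)
  also have "\<dots> = (\<Sum>m\<le>D. coeff Q m * (\<Sum>x<p. (of_nat x :: rat) ^ (r + m)))"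
    by (subst sum.swap) (simp add: sum_distrib_left)
  finally have eq1: "(\<Sum>x<p. of_nat x ^ r * poly Q (of_nat x)) = (\<Sum>m\<le>D. coeff Q m * (\<Sum>x<p. (of_nat x :: rat) ^ (r + m)))" .
  have h: "c * (S - (if b then -1 else 0)) = c * S + (if b then c else 0)" for c S :: rat and b
    by (auto simp: algebra_simps)
  have "(\<Sum>x<p. of_nat x ^ r * poly Q (of_nat x)) +
           (\<Sum>m\<le>D. if 0 < r + m \<and> (p-1) dvd (r + m) then coeff Q m else 0) =
     (\<Sum>m\<le>D. coeff Q m * ((\<Sum>x<p. (of_nat x :: rat) ^ (r + m)) - (if 0 < r + m \<and> (p-1) dvd (r + m) then -1 else 0)))"
    unfolding eq1 h sum.distrib by simp
  also have "rat_cong0 \<dots> p"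
    by (intro rc_sum[OF p] rc_mult'[OF p c] psum_cong[OF p])
  finally show ?thesis .
qed

lemma sel_sum:
  fixes D :: nat
  assumes "\<And>m. m \<le> D \<Longrightarrow> P m \<longleftrightarrow> m \<in> S" "S \<subseteq> {..D}"
  shows "(\<Sum>m\<le>D. if P m then f m else 0) = sum f S"
proof -
  have "(\<Sum>m\<le>D. if P m then f m else 0) = (\<Sum>m\<le>D. if m \<in> S then f m else 0)"
    using assms(1) by (intro sum.cong) auto
  also have "\<dots> = sum f ({..D} \<inter> S)" by (rule sum.inter_restrict[symmetric]) simp
  also have "{..D} \<inter> S = S" using assms(2) by auto
  finally show ?thesis .
qed

lemma dvd3:
  assumes "(d::nat) dvd t" "t < 3 * d"
  shows "t = 0 \<or> t = d \<or> t = 2 * d"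
proof -
  obtain q where q: "t = d * q" using assms(1) by blast
  then have "d * q < d * 3" using assms(2) by simp
  then have "q < 3" by (metis mult_less_cancel1)
  then have "q = 0 \<or> q = 1 \<or> q = 2" by auto
  then show ?thesis using q by auto
qed

lemma coeff_PS_mult:
  assumes "N \<le> m1" "N \<le> m2"
  shows "coeff (PS m1 * PS m2) (m1+m2+2-N) = (\<Sum>a=0..N. psc m1 a * psc m2 (N-a))"
proof -
  define n where "n = m1+m2+2-N"
  have "coeff (PS m1 * PS m2) n = (\<Sum>i\<le>n. coeff (PS m1) i * coeff (PS m2) (n-i))"
    by (rule coeff_mult)
  also have "\<dots> = (\<Sum>i\<in>{m1+1-N..m1+1}. coeff (PS m1) i * coeff (PS m2) (n-i))"
  proof (rule sum.mono_neutral_right)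
    show "{m1+1-N..m1+1} \<subseteq> {..n}" using assms unfolding n_def by auto
    show "\<forall>i\<in>{..n} - {m1+1-N..m1+1}. coeff (PS m1) i * coeff (PS m2) (n-i) = 0"
    proof
      fix i assume i: "i \<in> {..n} - {m1+1-N..m1+1}"
      show "coeff (PS m1) i * coeff (PS m2) (n-i) = 0"
      proof (cases "i > m1 + 1")
        case True then show ?thesis by (simp add: coeff_PS)
      next
        case False
        then have "i < m1+1-N" using i by auto
        then have "n - i > m2 + 1" using assms unfolding n_def by auto
        then show ?thesis by (simp add: coeff_PS)
      qed
    qed
  qed auto
  also have "\<dots> = (\<Sum>a=0..N. psc m1 a * psc m2 (N-a))"
  proof (rule sum.reindex_bij_witness[of _ "\<lambda>a. m1+1-a" "\<lambda>i. m1+1-i"])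
    fix i assume i: "i \<in> {m1+1-N..m1+1}"
    show "m1 + 1 - (m1 + 1 - i) = i" using i by auto
    show "m1 + 1 - i \<in> {0..N}" using i by auto
    have c1: "coeff (PS m1) i = psc m1 (m1+1-i)" using i assms by (auto simp: coeff_PS)
    have e: "m2 + 1 - (n - i) = N - (m1 + 1 - i)" using i assms unfolding n_def by auto
    have c2: "coeff (PS m2) (n-i) = psc m2 (N - (m1+1-i))"
      using i assms unfolding coeff_PS e[symmetric] unfolding n_def by auto
    show "psc m1 (m1 + 1 - i) * psc m2 (N - (m1 + 1 - i)) = coeff (PS m1) i * coeff (PS m2) (n - i)"
      unfolding c1 c2 ..
  next
    fix a assume a: "a \<in> {0..N}"
    show "m1 + 1 - (m1 + 1 - a) = a" using a assms by auto
    show "m1 + 1 - a \<in> {m1 + 1 - N..m1 + 1}" using a assms by auto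
  qed
  finally show ?thesis unfolding n_def .
qed

lemma binom_cong2:
  assumes p: "prime p" and "b + v \<le> p - 1"
  shows "[int ((p-1-b) choose v) = (-1)^v * (-1)^b * int ((p-1-v) choose b)] (mod int p)"
proof -
  have c1: "[int ((p-1-b) choose v) = (-1)^v * int ((b+v) choose v)] (mod int p)"
    by (rule binom_cong[OF p]) (use assms in simp)
  have c2: "[int ((p-1-v) choose b) = (-1)^b * int ((v+b) choose b)] (mod int p)"
    by (rule binom_cong[OF p]) (use assms in simp)
  have sym: "(b+v) choose v = (v+b) choose b"
    by (metis add.commute binomial_symmetric add_diff_cancel_left' le_add1)
  have "[(-1)^v * (-1)^b * int ((p-1-v) choose b) = (-1)^v * (-1)^b * ((-1)^b * int ((v+b) choose b))] (mod int p)"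
    by (intro cong_mult cong_refl c2)
  also have "(-1)^v * (-1)^b * ((-1)^b * int ((v+b) choose b)) = (-1)^v * int ((b+v) choose v)"
  proof -
    have "(-1::int)^b * (-1)^b = 1" by (simp add: power_add[symmetric])
    then show ?thesis unfolding sym by (simp add: algebra_simps)
  qed
  finally show ?thesis using c1 by (meson cong_sym cong_trans)
qed

lemma fac_gen:
  assumes p: "prime p" and "b + 2 \<le> p" and "b + v + 1 \<le> p" and "v + 2 \<le> p"
  shows "rat_cong0 (bernoulli b / of_nat (p - b) * of_nat ((p - b) choose (v + 1))
           - (-1)^v * (-1)^b * of_nat ((p-1-v) choose b) * bernoulli b / of_nat (v + 1)) p"
proof -
  have pb: "p - b = Suc (p - 1 - b)" using assms by auto
  have e1: "Suc v * ((p - b) choose (v + 1)) = (p - b) * ((p-1-b) choose v)"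
    unfolding pb using Suc_times_binomial[of v "p-1-b"] by simp
  then have "of_nat (Suc v) * of_nat ((p - b) choose (v + 1)) = (of_nat (p - b) * of_nat ((p-1-b) choose v) :: rat)"
    by (metis of_nat_mult)
  moreover have "(of_nat (p - b) :: rat) \<noteq> 0" "(of_nat (v+1) :: rat) \<noteq> 0" using assms by auto
  ultimately have e1': "of_nat ((p - b) choose (v + 1)) / of_nat (p - b) = (of_nat ((p-1-b) choose v) / of_nat (v+1) :: rat)"
    by (simp add: frac_eq_eq ac_simps)
  have "[int ((p-1-b) choose v) = (-1)^v * (-1)^b * int ((p-1-v) choose b)] (mod int p)"
    by (rule binom_cong2[OF p]) (use assms in simp)
  then have "int p dvd int ((p-1-b) choose v) - (-1)^v * (-1)^b * int ((p-1-v) choose b)"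
    by (simp add: cong_iff_dvd_diff dvd_diff_commute)
  then obtain z where z: "int ((p-1-b) choose v) - (-1)^v * (-1)^b * int ((p-1-v) choose b) = int p * z"
    by blast
  have "bernoulli b / of_nat (p - b) * of_nat ((p - b) choose (v + 1))
           - (-1)^v * (-1)^b * of_nat ((p-1-v) choose b) * bernoulli b / of_nat (v + 1)
       = (bernoulli b / of_nat (v+1)) * of_int (int ((p-1-b) choose v) - (-1)^v * (-1)^b * int ((p-1-v) choose b))"
  proof -
    have "bernoulli b / of_nat (p - b) * of_nat ((p - b) choose (v + 1)) = bernoulli b * (of_nat ((p - b) choose (v + 1)) / of_nat (p - b))"
      by simp
    also have "\<dots> = bernoulli b * (of_nat ((p-1-b) choose v) / of_nat (v+1))" unfolding e1' ..
    finally have h: "bernoulli b / of_nat (p - b) * of_nat ((p - b) choose (v + 1)) = bernoulli b * (of_nat ((p-1-b) choose v) / of_nat (v+1))" .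
    have h2: "(of_int (int ((p-1-b) choose v) - (-1)^v * (-1)^b * int ((p-1-v) choose b)) :: rat)
        = of_nat ((p-1-b) choose v) - (-1)^v * (-1)^b * of_nat ((p-1-v) choose b)" by simp
    show ?thesis unfolding h h2 by (simp add: algebra_simps)
  qed
  also have "\<dots> = of_nat p * (bernoulli b / of_nat (v+1) * of_int z)"
    unfolding z by simp
  also have "rat_cong0 \<dots> p"
  proof (rule rc_pmult[OF p], rule pint_mult[OF p], rule pint_div_nat[OF p bern_pint[OF p]])
    show "b + 2 \<le> p" by fact
    show "\<not> p dvd v + 1"
    proof
      assume "p dvd v + 1" then have "p \<le> v + 1" by (rule dvd_imp_le) simp
      then show False using assms prime_gt_1_nat[OF p] by simp
    qed
    show "pint p (of_int z)" by (rule pint_of_int[OF p])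
  qed
  finally show ?thesis .
qed

lemma tele_id: "((f::rat) + a)^2 * (g + b) - f^2 * g = 2*(a*(f*g)) + a^2 * g + b * f^2 + 2*(a*b*f) + a^2*b"
  by (simp add: algebra_simps power2_eq_square)


lemma sum_if_eq:
  fixes D r c :: nat
  shows "(\<Sum>m\<le>D. if r + m = c then f m else 0) = (if r \<le> c \<and> c - r \<le> D then f (c - r) else 0)"
proof -
  have "(\<Sum>m\<le>D. if r + m = c then f m else 0) = (\<Sum>m\<le>D. if m = c - r \<and> r \<le> c then f m else 0)"
    by (rule sum.cong) auto
  also have "\<dots> = (if r \<le> c \<and> c - r \<le> D then f (c - r) else 0)"
    by (cases "r \<le> c") (auto simp: sum.delta)
  finally show ?thesis .
qed

lemma sel3:
  fixes d r D :: nat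
  assumes "0 < r" "r + D < 3 * d"
  shows "(\<Sum>m\<le>D. if 0 < r + m \<and> d dvd (r + m) then f m else 0) =
    (if r \<le> d \<and> d - r \<le> D then f (d - r) else 0) + (if r \<le> 2*d \<and> 2*d - r \<le> D then f (2*d - r) else 0)"
proof -
  have d0: "d > 0" using assms by auto
  have "(\<Sum>m\<le>D. if 0 < r + m \<and> d dvd (r + m) then f m else 0) =
        (\<Sum>m\<le>D. (if r + m = d then f m else 0) + (if r + m = 2*d then f m else 0))"
  proof (rule sum.cong[OF refl])
    fix m assume m: "m \<in> {..D}"
    have "(0 < r + m \<and> d dvd (r + m)) \<longleftrightarrow> (r + m = d \<or> r + m = 2*d)"
    proof
      assume h: "0 < r + m \<and> d dvd (r + m)"
      have "r + m < 3 * d" using m assms by auto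
      then show "r + m = d \<or> r + m = 2*d" using dvd3[of d "r+m"] h by auto
    next
      assume "r + m = d \<or> r + m = 2*d"
      then show "0 < r + m \<and> d dvd (r + m)" using d0 by auto
    qed
    moreover have "\<not> (r + m = d \<and> r + m = 2*d)" using d0 by auto
    ultimately show "(if 0 < r + m \<and> d dvd (r + m) then f m else 0) =
        (if r + m = d then f m else 0) + (if r + m = 2*d then f m else 0)" by auto
  qed
  also have "\<dots> = (if r \<le> d \<and> d - r \<le> D then f (d - r) else 0) + (if r \<le> 2*d \<and> 2*d - r \<le> D then f (2*d - r) else 0)"
    unfolding sum.distrib sum_if_eq ..
  finally show ?thesis .
qed

lemma pint_coeff_mult:
  assumes p: "prime p" and "\<And>i. pint p (coeff P i)" "\<And>i. pint p (coeff Q i)"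
  shows "pint p (coeff (P * Q) m)"
  unfolding coeff_mult by (intro pint_sum[OF p] pint_mult[OF p] assms)

lemma core:
  fixes n p q :: nat
  assumes ev: "even n" and p: "prime p" and big: "p \<ge> 3 * n + 7" and qd: "q + n + 3 = p"
  shows "rat_cong0 (coeff (PS (q+1) * PS (q+1)) (p+n+1)) p \<and> rat_cong0 (coeff (PS q * PS (q+1)) (p+n)) p"
proof -
  define Fp where "Fp = PS (q+1)"
  define Gp where "Gp = PS q"
  define F where "F x = (\<Sum>j<x. (of_nat j :: rat) ^ (q+1))" for x
  define G where "G x = (\<Sum>j<x. (of_nat j :: rat) ^ q)" for x
  have p1: "p > 1" using prime_gt_1_nat[OF p] .
  have podd: "odd p" using prime_odd_nat[OF p] big by simp
  have pF: "poly Fp (of_nat x) = F x" for x unfolding Fp_def F_def by (rule poly_PS)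
  have pG: "poly Gp (of_nat x) = G x" for x unfolding Gp_def G_def by (rule poly_PS)
  define T1 where "T1 x = (of_nat x :: rat) ^ (q+1) * poly (Fp * Gp) (of_nat x)" for x
  define T2 where "T2 x = (of_nat x :: rat) ^ (2*q+2) * poly Gp (of_nat x)" for x
  define T3 where "T3 x = (of_nat x :: rat) ^ q * poly (Fp^2) (of_nat x)" for x
  define T4 where "T4 x = (of_nat x :: rat) ^ (2*q+1) * poly Fp (of_nat x)" for x
  define T5 where "T5 x = (of_nat x :: rat) ^ (3*q+2)" for x
  have step: "F (Suc x)^2 * G (Suc x) - F x^2 * G x = 2 * T1 x + T2 x + T3 x + 2 * T4 x + T5 x" for x
  proof -
    have e: "F (Suc x) = F x + of_nat x ^ (q+1)" "G (Suc x) = G x + of_nat x ^ q"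
      unfolding F_def G_def by simp_all
    have "F (Suc x)^2 * G (Suc x) - F x^2 * G x = 2*(of_nat x ^ (q+1)*(F x*G x)) + (of_nat x ^ (q+1))^2 * G x
       + of_nat x ^ q * F x^2 + 2*(of_nat x ^ (q+1)*of_nat x ^ q*F x) + (of_nat x ^ (q+1))^2*of_nat x ^ q"
      unfolding e by (rule tele_id)
    also have "\<dots> = 2 * T1 x + T2 x + T3 x + 2 * T4 x + T5 x"
    proof -
      let ?x = "of_nat x :: rat"
      have h2: "(?x ^ (q+1))^2 = ?x ^ (2*q+2)"
        by (metis power_mult mult.commute mult_Suc_right Suc_eq_plus1 add_Suc_right mult_2 add.commute)
      have h4: "?x ^ (q+1) * ?x ^ q = ?x ^ (2*q+1)"
        by (simp add: power_add[symmetric] mult_2)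
      have h5: "?x ^ (2*q+2) * ?x ^ q = ?x ^ (3*q+2)"
        by (simp add: power_add[symmetric])
      show ?thesis
        unfolding T1_def T2_def T3_def T4_def T5_def poly_mult poly_power pF pG h2 h4 h5 by simp
    qed
    finally show ?thesis .
  qed
  have tel: "2 * (\<Sum>x<p. T1 x) + (\<Sum>x<p. T2 x) + (\<Sum>x<p. T3 x) + 2 * (\<Sum>x<p. T4 x) + (\<Sum>x<p. T5 x) = F p^2 * G p"
  proof -
    have "(\<Sum>x<p. F (Suc x)^2 * G (Suc x) - F x^2 * G x) = F p^2 * G p - F 0^2 * G 0"
      by (rule sum_lessThan_telescope)
    moreover have "F 0 = 0" unfolding F_def by simp
    ultimately have "(\<Sum>x<p. 2 * T1 x + T2 x + T3 x + 2 * T4 x + T5 x) = F p^2 * G p"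
      unfolding step by simp
    then show ?thesis by (simp add: sum.distrib sum_distrib_left)
  qed
  have cF: "pint p (coeff Fp i)" for i unfolding Fp_def by (rule pint_coeff_PS[OF p]) (use qd in simp)
  have cG: "pint p (coeff Gp i)" for i unfolding Gp_def by (rule pint_coeff_PS[OF p]) (use qd in simp)
  have cFG: "pint p (coeff (Fp * Gp) i)" for i by (rule pint_coeff_mult[OF p cF cG])
  have cFF: "pint p (coeff (Fp ^ 2) i)" for i unfolding power2_eq_square by (rule pint_coeff_mult[OF p cF cF])
  have dF: "degree Fp \<le> q + 2" unfolding Fp_def using degree_PS[of "q+1"] by simp
  have dG: "degree Gp \<le> q + 1" unfolding Gp_def using degree_PS[of q] by simp
  have dFG: "degree (Fp * Gp) \<le> 2*q+3" using degree_mult_le[of Fp Gp] dF dG by simp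
  have dFF: "degree (Fp ^ 2) \<le> 2*q+4" unfolding power2_eq_square using degree_mult_le[of Fp Fp] dF by simp
  have g1: "rat_cong0 ((\<Sum>x<p. T1 x) + (coeff (Fp*Gp) (n+1) + coeff (Fp*Gp) (p+n))) p"
  proof -
    have "rat_cong0 ((\<Sum>x<p. T1 x) + (\<Sum>m\<le>2*q+3. if 0 < (q+1) + m \<and> (p-1) dvd ((q+1) + m) then coeff (Fp*Gp) m else 0)) p"
      unfolding T1_def by (rule GL[OF p cFG dFG])
    moreover have "(\<Sum>m\<le>2*q+3. if 0 < (q+1) + m \<and> (p-1) dvd ((q+1) + m) then coeff (Fp*Gp) m else 0)
        = coeff (Fp*Gp) (n+1) + coeff (Fp*Gp) (p+n)"
    proof -
      have a: "q + 1 + (2*q+3) < 3 * (p-1)" using qd big by linarith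
      have r0: "0 < q + 1" by simp
      have b: "p - 1 - (q+1) = n+1" "2*(p-1) - (q+1) = p+n" using qd by auto
      show ?thesis unfolding sel3[OF r0 a] b using qd big by (simp; presburger?)
    qed
    ultimately show ?thesis by simp
  qed
  have g2: "rat_cong0 (\<Sum>x<p. T2 x) p"
  proof -
    have "rat_cong0 ((\<Sum>x<p. T2 x) + (\<Sum>m\<le>q+1. if 0 < (2*q+2) + m \<and> (p-1) dvd ((2*q+2) + m) then coeff Gp m else 0)) p"
      unfolding T2_def by (rule GL[OF p cG dG])
    moreover have "(\<Sum>m\<le>q+1. if 0 < (2*q+2) + m \<and> (p-1) dvd ((2*q+2) + m) then coeff Gp m else 0) = coeff Gp (2*n+2)"
    proof -
      have a: "2*q+2 + (q+1) < 3 * (p-1)" using qd big by linarith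
      have r0: "0 < 2*q+2" by simp
      have b: "2*(p-1) - (2*q+2) = 2*n+2" using qd by auto
      show ?thesis unfolding sel3[OF r0 a] b using qd big by (simp; presburger?)
    qed
    moreover have "coeff Gp (2*n+2) = 0"
    proof -
      have "coeff Gp (2*n+2) = psc q (q+1-(2*n+2))" unfolding Gp_def coeff_PS using qd big by simp
      moreover have "bernoulli (q+1-(2*n+2)) = 0"
        by (rule bern_odd) (use qd big podd ev in auto)
      ultimately show ?thesis by (simp add: psc_def)
    qed
    ultimately show ?thesis by simp
  qed
  have g3: "rat_cong0 ((\<Sum>x<p. T3 x) + (coeff (Fp^2) (n+2) + coeff (Fp^2) (p+n+1))) p"
  proof -
    have "rat_cong0 ((\<Sum>x<p. T3 x) + (\<Sum>m\<le>2*q+4. if 0 < q + m \<and> (p-1) dvd (q + m) then coeff (Fp^2) m else 0)) p"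
      unfolding T3_def by (rule GL[OF p cFF dFF])
    moreover have "(\<Sum>m\<le>2*q+4. if 0 < q + m \<and> (p-1) dvd (q + m) then coeff (Fp^2) m else 0)
        = coeff (Fp^2) (n+2) + coeff (Fp^2) (p+n+1)"
    proof -
      have a: "q + (2*q+4) < 3 * (p-1)" using qd big by linarith
      have r0: "0 < q" using qd big by linarith
      have b: "p - 1 - q = n+2" "2*(p-1) - q = p+n+1" using qd by auto
      show ?thesis unfolding sel3[OF r0 a] b using qd big by (simp; presburger?)
    qed
    ultimately show ?thesis by simp
  qed
  have g4: "rat_cong0 (\<Sum>x<p. T4 x) p"
  proof -
    have "rat_cong0 ((\<Sum>x<p. T4 x) + (\<Sum>m\<le>q+2. if 0 < (2*q+1) + m \<and> (p-1) dvd ((2*q+1) + m) then coeff Fp m else 0)) p"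
      unfolding T4_def by (rule GL[OF p cF dF])
    moreover have "(\<Sum>m\<le>q+2. if 0 < (2*q+1) + m \<and> (p-1) dvd ((2*q+1) + m) then coeff Fp m else 0) = coeff Fp (2*n+3)"
    proof -
      have a: "2*q+1 + (q+2) < 3 * (p-1)" using qd big by linarith
      have r0: "0 < 2*q+1" by simp
      have b: "2*(p-1) - (2*q+1) = 2*n+3" using qd by auto
      show ?thesis unfolding sel3[OF r0 a] b using qd big by (simp; presburger?)
    qed
    moreover have "coeff Fp (2*n+3) = 0"
    proof -
      have "coeff Fp (2*n+3) = psc (q+1) (q+2-(2*n+3))" unfolding Fp_def coeff_PS using qd big by simp
      moreover have "bernoulli (q+2-(2*n+3)) = 0"
        by (rule bern_odd) (use qd big podd ev in auto)
      ultimately show ?thesis by (simp add: psc_def)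
    qed
    ultimately show ?thesis by simp
  qed
  have g5: "rat_cong0 (\<Sum>x<p. T5 x) p"
  proof -
    have nd: "\<not> (p-1) dvd (3*q+2)"
    proof
      assume h: "(p-1) dvd (3*q+2)"
      have "3*q+2 < 3*(p-1)" using qd by linarith
      then show False using dvd3[OF h] qd big by linarith
    qed
    show ?thesis using psum_cong[OF p, of "3*q+2"] nd unfolding T5_def by simp
  qed
  have Fp0: "rat_cong0 (F p) p"
  proof -
    have nd: "\<not> (p-1) dvd (q+1)"
    proof
      assume h: "(p-1) dvd (q+1)"
      then have "p - 1 \<le> q + 1" by (rule dvd_imp_le) simp
      then show False using qd big by linarith
    qed
    show ?thesis using psum_cong[OF p, of "q+1"] nd unfolding F_def by simp
  qed
  have Gpint: "pint p (G p)" unfolding G_def by (intro pint_sum[OF p] pint_power[OF p] pint_of_nat[OF p])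
  have R0: "rat_cong0 (F p^2 * G p) p"
    unfolding power2_eq_square mult.assoc
    by (rule rc_mult[OF p Fp0], rule pint_mult[OF p rc_pint[OF Fp0] Gpint])
  define a1 where "a1 = coeff (Fp*Gp) (n+1)"
  define a2 where "a2 = coeff (Fp*Gp) (p+n)"
  define c1 where "c1 = coeff (Fp^2) (n+2)"
  define c2 where "c2 = coeff (Fp^2) (p+n+1)"
  define X where "X = 2*(a1+a2) + (c1+c2)"
  have X0: "rat_cong0 X p"
  proof -
    have "X = 2*((\<Sum>x<p. T1 x) + (a1+a2)) + ((\<Sum>x<p. T3 x) + (c1+c2)) + ((\<Sum>x<p. T2 x) + 2*(\<Sum>x<p. T4 x) + (\<Sum>x<p. T5 x) - F p^2 * G p)"
    proof -
      have h: "R = 2*s1+s2+s3+2*s4+s5 \<Longrightarrow> 2*A + C = 2*(s1+A)+(s3+C)+(s2+2*s4+s5-R)" for s1 s2 s3 s4 s5 R A C :: rat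
        by (simp add: algebra_simps)
      show ?thesis unfolding X_def by (rule h) (use tel in simp)
    qed
    also have "rat_cong0 \<dots> p"
      by (intro rc_diff[OF p] rc_add[OF p] rc_mult'[OF p] g1[folded a1_def a2_def] g3[folded c1_def c2_def] g2 g4 g5 R0 pint_of_nat[OF p, of 2, simplified])
    finally show ?thesis .
  qed
  have B0: "bernoulli (q+1) = 0" by (rule bern_odd) (use qd big podd ev in auto)
  have dF1: "pderiv Fp = smult (of_nat (q+1)) Gp"
    unfolding Fp_def Gp_def using pderiv_PS[of "q+1"] B0 by simp
  have dFF1: "pderiv (Fp^2) = smult (2 * of_nat (q+1)) (Fp*Gp)"
  proof -
    have "pderiv (Fp ^ Suc 1) = smult (of_nat (Suc 1)) (Fp ^ 1) * pderiv Fp" by (rule pderiv_power_Suc)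
    then show ?thesis unfolding dF1 by (simp add: numeral_2_eq_2 mult_smult_left mult_smult_right mult.commute)
  qed
  have rel: "of_nat (Suc j) * coeff (Fp^2) (Suc j) = 2 * of_nat (q+1) * coeff (Fp*Gp) j" for j
    using coeff_pderiv[of "Fp^2" j] unfolding dFF1 by simp
  have r1: "2 * of_nat (q+1) * a1 = of_nat (n+2) * c1" unfolding a1_def c1_def using rel[of "n+1"] by simp
  have r2: "2 * of_nat (q+1) * a2 = of_nat (p+n+1) * c2" unfolding a2_def c2_def using rel[of "p+n"] by simp
  have qr: "(of_nat p :: rat) = of_nat q + of_nat n + 3" using qd[symmetric] by simp
  have "of_int (2 * int p - 1) * c2 = of_nat (q+1) * X - of_nat p * c1"
  proof -
    have "of_nat (q+1) * X = (2 * of_nat (q+1) * a1) + (2 * of_nat (q+1) * a2) + of_nat (q+1) * (c1 + c2)"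
      unfolding X_def by (simp add: algebra_simps)
    also have "\<dots> = of_nat (n+2) * c1 + of_nat (p+n+1) * c2 + of_nat (q+1) * (c1 + c2)" unfolding r1 r2 ..
    also have "\<dots> = of_nat p * c1 + (2 * of_nat p - 1) * c2" by (simp add: qr algebra_simps)
    finally show ?thesis by simp
  qed
  moreover have "rat_cong0 (of_nat (q+1) * X - of_nat p * c1) p"
    by (rule rc_diff[OF p rc_mult'[OF p pint_of_nat[OF p] X0] rc_pmult[OF p cFF[of "n+2", folded c1_def]]])
  ultimately have "rat_cong0 (of_int (2 * int p - 1) * c2) p" by simp
  then have "rat_cong0 c2 p"
  proof (rule rc_cancel[OF _ _ p])
    show "\<not> int p dvd 2 * int p - 1"
    proof
      assume "int p dvd 2 * int p - 1"
      moreover have "int p dvd 2 * int p" by simp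
      ultimately have "int p dvd 2 * int p - (2 * int p - 1)" by (metis dvd_diff)
      then have "int p dvd 1" by simp
      then show False using p1 by simp
    qed
  qed
  note c20 = this
  have nd2: "\<not> int p dvd int (2 * (q+1))"
  proof
    assume "int p dvd int (2 * (q+1))"
    then have "p dvd 2 * (q+1)" by (simp only: int_dvd_int_iff)
    then have "p dvd 2 \<or> p dvd (q+1)" using prime_dvd_mult_iff[OF p] by blast
    moreover have "\<not> p dvd 2" using big by (auto dest: dvd_imp_le)
    moreover have "\<not> p dvd (q+1)"
    proof
      assume "p dvd (q+1)" then have "p \<le> q+1" by (rule dvd_imp_le) simp
      then show False using qd by simp
    qed
    ultimately show False by blast
  qed
  have "a2 = c2 * (of_nat (p+n+1) / of_int (int (2 * (q+1))))"
    using r2 by (simp add: field_simps)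
  moreover have "rat_cong0 (c2 * (of_nat (p+n+1) / of_int (int (2 * (q+1))))) p"
    by (rule rc_mult[OF p c20 pint_div[OF p pint_of_nat[OF p] nd2]])
  ultimately have "rat_cong0 a2 p" by simp
  then show ?thesis using c20 unfolding a2_def c2_def Fp_def Gp_def power2_eq_square by (simp add: mult.commute)
qed

lemma rc_prod2:
  assumes p: "prime p" and "rat_cong0 (x - X) p" "rat_cong0 (y - Y) p" "pint p y" "pint p X"
  shows "rat_cong0 (x * y - X * Y) p"
proof -
  have "x * y - X * Y = (x - X) * y + X * (y - Y)" by (simp add: algebra_simps)
  also have "rat_cong0 \<dots> p"
    by (rule rc_add[OF p rc_mult[OF p assms(2,4)] rc_mult'[OF p assms(5,3)]])
  finally show ?thesis .
qed

theorem lemma3p15: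
  fixes n p :: nat
  assumes "even n" and "prime p" and "p \<ge> 3 * n + 7"
  shows "rat_cong0 (\<Sum>a = 0..p - 3 * n - 3. let b = p - 3 * n - 3 - a in
            bernoulli b / of_nat (p - b) * of_nat ((p - b) choose (n + 1)) *
            (bernoulli a / of_nat (p - a) * of_nat ((p - a) choose (n + 2)))) p
       \<and> rat_cong0 (\<Sum>a = 0..p - 3 * n - 3. let b = p - 3 * n - 3 - a in
            bernoulli b / of_nat (p - b) * of_nat ((p - b) choose (n + 1)) *
            (bernoulli a / of_nat (p - a) * of_nat ((p - a) choose (n + 1)))) p"
proof -
  note ev = assms(1) and p = assms(2) and big = assms(3)
  define q where "q = p - n - 3"
  have qd: "q + n + 3 = p" using big unfolding q_def by simp
  define N where "N = p - 3 * n - 3"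
  have podd: "odd p" using prime_odd_nat[OF p] big by simp
  have evN: "even N" unfolding N_def using podd ev big by presburger
  have sgn: "(-1::rat)^(N-a) * (-1)^a = 1" if "a \<le> N" for a
  proof -
    have "(-1::rat)^(N-a) * (-1)^a = (-1)^N" using that by (simp add: power_add[symmetric])
    then show ?thesis using evN by simp
  qed
  obtain C2 A2 where C2: "rat_cong0 (coeff (PS (q+1) * PS (q+1)) (p+n+1)) p"
    and A2: "rat_cong0 (coeff (PS q * PS (q+1)) (p+n)) p"
    using core[OF ev p big qd] by blast
  have e1: "(q+1)+(q+1)+2-N = p+n+1" unfolding N_def using qd big by simp
  have e2: "q+(q+1)+2-N = p+n" unfolding N_def using qd big by simp
  have C2': "rat_cong0 (\<Sum>a=0..N. psc (q+1) a * psc (q+1) (N-a)) p"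
    using C2 coeff_PS_mult[of N "q+1" "q+1"] e1 qd big unfolding N_def by simp
  have A2': "rat_cong0 (\<Sum>a=0..N. psc q a * psc (q+1) (N-a)) p"
    using A2 coeff_PS_mult[of N q "q+1"] e2 qd big unfolding N_def by simp
  define U where "U b = bernoulli b / of_nat (p - b) * of_nat ((p - b) choose (n + 1))" for b
  define W where "W a = bernoulli a / of_nat (p - a) * of_nat ((p - a) choose (n + 2))" for a
  define K2 where "K2 = (of_nat (q+1+1) / of_nat (n+1) :: rat)"
  define K1 where "K1 = (of_nat (q+1) / of_nat (n+1+1) :: rat)"
  have h: "z \<noteq> 0 \<Longrightarrow> m \<noteq> 0 \<Longrightarrow> sg * C * B / m = sg * (z / m * (C * B / z))" for sg C B m z :: rat
    by (simp add: field_simps)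
  have h': "z \<noteq> 0 \<Longrightarrow> m \<noteq> 0 \<Longrightarrow> - (sg * C * B / m) = sg * (- (z / m * (C * B / z)))" for sg C B m z :: rat
    by (simp add: field_simps)
  define V where "V b = (-1)^b * (K2 * psc (q+1) b)" for b
  define V' where "V' a = (-1)^a * (- (K1 * psc q a))" for a
  have ndn1: "\<not> p dvd (n+1)" "\<not> p dvd (n+2)" using big by (auto dest: dvd_imp_le)
  have K2p: "pint p K2" unfolding K2_def by (rule pint_div_nat[OF p pint_of_nat[OF p]]) (use big in \<open>auto dest: dvd_imp_le\<close>)
  have K1p: "pint p K1" unfolding K1_def by (rule pint_div_nat[OF p pint_of_nat[OF p]]) (use big in \<open>auto dest: dvd_imp_le\<close>)
  have pintV: "pint p (V b)" if "b \<le> N" for b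
    unfolding V_def K2_def
    by (intro pint_mult[OF p] pint_power[OF p] pint_neg pint_1[OF p] pint_div_nat[OF p] pint_of_nat[OF p] pint_psc[OF p] ndn1)
       (use that qd big in \<open>auto simp: N_def dest: dvd_imp_le\<close>)
  have pintV': "pint p (V' a)" if "a \<le> N" for a
    unfolding V'_def K1_def
    by (intro pint_mult[OF p] pint_power[OF p] pint_neg pint_1[OF p] pint_div_nat[OF p] pint_of_nat[OF p] pint_psc[OF p] ndn1)
       (use that qd big in \<open>auto simp: N_def dest: dvd_imp_le\<close>)
  have facU: "rat_cong0 (U b - V b) p" if "b \<le> N" for b
  proof -
    have "rat_cong0 (bernoulli b / of_nat (p - b) * of_nat ((p - b) choose (n + 1))
           - (-1)^n * (-1)^b * of_nat ((p-1-n) choose b) * bernoulli b / of_nat (n + 1)) p"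
      by (rule fac_gen[OF p]) (use that big in \<open>auto simp: N_def\<close>)
    moreover have "(-1)^n * (-1)^b * of_nat ((p-1-n) choose b) * bernoulli b / of_nat (n + 1) = V b"
    proof -
      have pe: "p - 1 - n = q + 1 + 1" using qd by simp
      have "(-1)^n * (-1)^b * of_nat ((p-1-n) choose b) * bernoulli b / of_nat (n + 1)
          = (-1)^b * of_nat ((q+1+1) choose b) * bernoulli b / (of_nat (n + 1) :: rat)"
        unfolding pe using ev by simp
      also have "\<dots> = V b" unfolding V_def K2_def psc_def by (rule h) simp_all
      finally show ?thesis .
    qed
    ultimately show ?thesis unfolding U_def by simp
  qed
  have facW: "rat_cong0 (W a - V' a) p" if "a \<le> N" for a
  proof -
    have f1: "rat_cong0 (bernoulli a / of_nat (p - a) * of_nat ((p - a) choose ((n+1) + 1))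
           - (-1)^(n+1) * (-1)^a * of_nat ((p-1-(n+1)) choose a) * bernoulli a / of_nat ((n+1) + 1)) p"
      by (rule fac_gen[OF p]) (use that big in \<open>auto simp: N_def\<close>)
    have f2: "(-1)^(n+1) * (-1)^a * of_nat ((p-1-(n+1)) choose a) * bernoulli a / of_nat ((n+1) + 1) = V' a"
    proof -
      have pe: "p - 1 - (n+1) = q + 1" using qd by simp
      have "(-1)^(n+1) * (-1)^a * of_nat ((p-1-(n+1)) choose a) * bernoulli a / of_nat ((n+1) + 1)
          = - ((-1)^a * of_nat ((q+1) choose a) * bernoulli a / (of_nat (n + 1 + 1) :: rat))"
        unfolding pe using ev by simp
      also have "\<dots> = V' a" unfolding V'_def K1_def psc_def by (rule h') simp_all
      finally show ?thesis .
    qed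
    have wa: "W a = bernoulli a / of_nat (p - a) * of_nat ((p - a) choose ((n+1) + 1))"
      unfolding W_def by (simp add: numeral_2_eq_2)
    show ?thesis using f1 unfolding f2 wa .
  qed
  have pintU: "pint p (U b)" if "b \<le> N" for b
  proof -
    have "pint p ((U b - V b) + V b)" by (rule pint_add[OF p rc_pint[OF facU[OF that]] pintV[OF that]])
    then show ?thesis by simp
  qed
  have pintW: "pint p (W a)" if "a \<le> N" for a
  proof -
    have "pint p ((W a - V' a) + V' a)" by (rule pint_add[OF p rc_pint[OF facW[OF that]] pintV'[OF that]])
    then show ?thesis by simp
  qed
  have S2: "rat_cong0 (\<Sum>a=0..N. U (N-a) * U a) p"
  proof -
    have "(\<Sum>a=0..N. U (N-a) * U a) = (\<Sum>a=0..N. U (N-a) * U a - V (N-a) * V a) + K2 * K2 * (\<Sum>a=0..N. psc (q+1) a * psc (q+1) (N-a))"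
    proof -
      have "(\<Sum>a=0..N. V (N-a) * V a) = K2 * K2 * (\<Sum>a=0..N. psc (q+1) a * psc (q+1) (N-a))"
        unfolding sum_distrib_left
      proof (rule sum.cong[OF refl])
        fix a assume "a \<in> {0..N}"
        then have "(-1::rat)^(N-a) * (-1)^a = 1" using sgn by simp
        then show "V (N-a) * V a = K2 * K2 * (psc (q+1) a * psc (q+1) (N-a))"
          unfolding V_def by (simp add: algebra_simps)
      qed
      then show ?thesis by (simp add: sum_subtractf)
    qed
    also have "rat_cong0 \<dots> p"
    proof (rule rc_add[OF p])
      show "rat_cong0 (\<Sum>a=0..N. U (N-a) * U a - V (N-a) * V a) p"
      proof (rule rc_sum[OF p])
        fix a assume "a \<in> {0..N}"
        then have a: "a \<le> N" "N - a \<le> N" by auto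
        show "rat_cong0 (U (N-a) * U a - V (N-a) * V a) p"
          by (rule rc_prod2[OF p facU[OF a(2)] facU[OF a(1)] pintU[OF a(1)] pintV[OF a(2)]])
      qed
      show "rat_cong0 (K2 * K2 * (\<Sum>a=0..N. psc (q+1) a * psc (q+1) (N-a))) p"
        by (rule rc_mult'[OF p pint_mult[OF p K2p K2p] C2'])
    qed
    finally show ?thesis .
  qed
  have S1: "rat_cong0 (\<Sum>a=0..N. U (N-a) * W a) p"
  proof -
    have "(\<Sum>a=0..N. U (N-a) * W a) = (\<Sum>a=0..N. U (N-a) * W a - V (N-a) * V' a) + (- (K2 * K1)) * (\<Sum>a=0..N. psc q a * psc (q+1) (N-a))"
    proof -
      have "(\<Sum>a=0..N. V (N-a) * V' a) = (- (K2 * K1)) * (\<Sum>a=0..N. psc q a * psc (q+1) (N-a))"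
        unfolding sum_distrib_left
      proof (rule sum.cong[OF refl])
        fix a assume "a \<in> {0..N}"
        then have "(-1::rat)^(N-a) * (-1)^a = 1" using sgn by simp
        then show "V (N-a) * V' a = (- (K2 * K1)) * (psc q a * psc (q+1) (N-a))"
          unfolding V_def V'_def by (simp add: algebra_simps)
      qed
      then show ?thesis by (simp add: sum_subtractf)
    qed
    also have "rat_cong0 \<dots> p"
    proof (rule rc_add[OF p])
      show "rat_cong0 (\<Sum>a=0..N. U (N-a) * W a - V (N-a) * V' a) p"
      proof (rule rc_sum[OF p])
        fix a assume "a \<in> {0..N}"
        then have a: "a \<le> N" "N - a \<le> N" by auto
        show "rat_cong0 (U (N-a) * W a - V (N-a) * V' a) p"
          by (rule rc_prod2[OF p facU[OF a(2)] facW[OF a(1)] pintW[OF a(1)] pintV[OF a(2)]])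
      qed
      show "rat_cong0 ((- (K2 * K1)) * (\<Sum>a=0..N. psc q a * psc (q+1) (N-a))) p"
        by (rule rc_mult'[OF p pint_neg[OF pint_mult[OF p K2p K1p]] A2'])
    qed
    finally show ?thesis .
  qed
  show ?thesis using S1 S2 unfolding U_def W_def N_def Let_def by simp
qed

end
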